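(* Let $\mathcal{H}$ be a finite-dimensional complex Hilbert space, let $\ket{\psi_1},\ket{\psi_2}\in\mathcal{H}$ be pure states, and let $\alpha,\beta\in[0,1]$. For every ontological model (as defined in the context) for these two preparations, $$S^{Gam}_Q(\psi_1,\psi_2;\alpha,\beta)\le S^{Gam}_\Lambda(\psi_1,\psi_2;\alpha,\beta)=1-\frac{\omega_\Lambda(\psi_1,\psi_2;\alpha,\beta)}{2},$$ where $S^{Gam}_\Lambda(\psi_1,\psi_2;\alpha,\beta)=\tfrac12\int_\Lambda\max\big(\tilde\mu_1(\lambda),\tilde\mu_2(\lambda),\tilde\mu_3(\lambda)\big)d\lambda-\beta$ and $$\omega_\Lambda(\psi_1,\psi_2;\alpha,\beta)=T_1+T_2+T_3-T_4,$$ with $T_1=\int_\Lambda\min(\tilde\mu_1,\tilde\mu_2)d\lambda$, $T_2=\int_\Lambda\min(\tilde\mu_1,\tilde\mu_3)d\lambda-(\alpha+\beta)$, $T_3=\int_\Lambda\min(\tilde\mu_2,\tilde\mu_3)d\lambda-(\alpha+\beta)$, $T_4=\int_\Lambda\min(\tilde\mu_1,\tilde\mu_2,\tilde\mu_3)d\lambda$, and $\tilde\mu_1(\lambda)=(1+\beta)\mu(\lambda|\psi_1)$, $\tilde\mu_2(\lambda)=(1+\beta)\mu(\lambda|\psi_2)$, $\tilde\mu_3(\lambda)=(\alpha+\beta)\big(\mu(\lambda|\psi_1)+\mu(\lambda|\psi_2)\big)$.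
   Context: For a state $\sigma$ and POVM $\mathcal{M}=\{M_k\}$, $p(k|\sigma,\mathcal{M})=\mathrm{Tr}(\sigma M_k)$. Quantum gambling value: $S^{Gam}_Q(\psi_1,\psi_2;\alpha,\beta)=\tfrac12\max_{\mathcal{M}}\big(p(1|\psi_1,\mathcal{M})-\beta p(2|\psi_1,\mathcal{M})+\alpha p(3|\psi_1,\mathcal{M})+p(2|\psi_2,\mathcal{M})-\beta p(1|\psi_2,\mathcal{M})+\alpha p(3|\psi_2,\mathcal{M})\big)$, the maximum over all three-outcome POVMs $\mathcal{M}=\{M_1,M_2,M_3\}$ on $\mathcal{H}$. Ontological model: a measure space $(\Lambda,d\lambda)$; for each preparation $\psi_j$ ($j=1,2$) a probability density $\mu(\lambda|\psi_j)\ge 0$ with $\int_\Lambda\mu(\lambda|\psi_j)d\lambda=1$; for each $n$-outcome POVM $\mathcal{M}$ response functions $\xi(k|\lambda,\mathcal{M})\ge0$ with $\sum_k\xi(k|\lambda,\mathcal{M})=1$ for all $\lambda$; such that $\bra{\psi_j}M_k\ket{\psi_j}=\int_\Lambda\mu(\lambda|\psi_j)\xi(k|\lambda,\mathcal{M})d\lambda$ for all $j,\mathcal{M},k$. *)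

theory Defs
  imports "HOL-Analysis.Analysis" "HOL-Probability.Probability"
begin

definition cinner_vec :: "complex ^ 'n::finite \<Rightarrow> complex ^ 'n \<Rightarrow> complex" where
  "cinner_vec x y = (\<Sum>i\<in>UNIV. cnj (x $ i) * y $ i)"

definition expval :: "complex ^ 'n::finite \<Rightarrow> complex ^ 'n ^ 'n \<Rightarrow> complex" where
  "expval psi M = cinner_vec psi (M *v psi)"

definition pure_state :: "complex ^ 'n::finite \<Rightarrow> bool" where
  "pure_state psi \<longleftrightarrow> cinner_vec psi psi = 1"

definition psd :: "complex ^ 'n::finite ^ 'n \<Rightarrow> bool" where
  "psd M \<longleftrightarrow> (\<forall>v. Im (expval v M) = 0 \<and> Re (expval v M) \<ge> 0)"

text \<open>A POVM with n = length Ms outcomes; outcome k (1-based in the paper) is Ms ! (k-1).\<close>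
definition is_POVM :: "(complex ^ 'n::finite ^ 'n) list \<Rightarrow> bool" where
  "is_POVM Ms \<longleftrightarrow> (\<forall>M\<in>set Ms. psd M) \<and> sum_list Ms = mat 1"

definition prob :: "complex ^ 'n::finite \<Rightarrow> (complex ^ 'n ^ 'n) list \<Rightarrow> nat \<Rightarrow> real" where
  "prob psi Ms k = Re (expval psi (Ms ! (k - 1)))"

definition gamble_payoff ::
  "complex ^ 'n::finite \<Rightarrow> complex ^ 'n \<Rightarrow> real \<Rightarrow> real \<Rightarrow> (complex ^ 'n ^ 'n) list \<Rightarrow> real" where
  "gamble_payoff psi1 psi2 \<alpha> \<beta> Ms =
     prob psi1 Ms 1 - \<beta> * prob psi1 Ms 2 + \<alpha> * prob psi1 Ms 3
     + prob psi2 Ms 2 - \<beta> * prob psi2 Ms 1 + \<alpha> * prob psi2 Ms 3"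

definition S_Q_Gam :: "complex ^ 'n::finite \<Rightarrow> complex ^ 'n \<Rightarrow> real \<Rightarrow> real \<Rightarrow> real" where
  "S_Q_Gam psi1 psi2 \<alpha> \<beta> =
     (1/2) * Sup {gamble_payoff psi1 psi2 \<alpha> \<beta> Ms | Ms. is_POVM Ms \<and> length Ms = 3}"

text \<open>Ontological model on measure space L for preparations psi1, psi2, with densities
  mu1 = mu(.|psi1), mu2 = mu(.|psi2) and response functions xi Ms k lam = xi(k+1 | lam, Ms)
  (0-based outcome index k < length Ms).\<close>
definition ontological_model ::
  "'l measure \<Rightarrow> ('l \<Rightarrow> real) \<Rightarrow> ('l \<Rightarrow> real) \<Rightarrow>
   ((complex ^ 'n::finite ^ 'n) list \<Rightarrow> nat \<Rightarrow> 'l \<Rightarrow> real) \<Rightarrow>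
   complex ^ 'n \<Rightarrow> complex ^ 'n \<Rightarrow> bool" where
  "ontological_model L mu1 mu2 xi psi1 psi2 \<longleftrightarrow>
     (\<forall>mu\<in>{mu1, mu2}. mu \<in> borel_measurable L \<and> (\<forall>l\<in>space L. mu l \<ge> 0)
        \<and> integrable L mu \<and> integral\<^sup>L L mu = 1)
   \<and> (\<forall>Ms. is_POVM Ms \<longrightarrow>
        (\<forall>k<length Ms. xi Ms k \<in> borel_measurable L \<and> (\<forall>l\<in>space L. xi Ms k l \<ge> 0))
        \<and> (\<forall>l\<in>space L. (\<Sum>k<length Ms. xi Ms k l) = 1)
        \<and> (\<forall>k<length Ms.
             expval psi1 (Ms ! k) = complex_of_real (\<integral>l. mu1 l * xi Ms k l \<partial>L)
           \<and> expval psi2 (Ms ! k) = complex_of_real (\<integral>l. mu2 l * xi Ms k l \<partial>L)))"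

definition mu_t1 :: "('l \<Rightarrow> real) \<Rightarrow> real \<Rightarrow> 'l \<Rightarrow> real" where
  "mu_t1 mu1 \<beta> l = (1 + \<beta>) * mu1 l"
definition mu_t2 :: "('l \<Rightarrow> real) \<Rightarrow> real \<Rightarrow> 'l \<Rightarrow> real" where
  "mu_t2 mu2 \<beta> l = (1 + \<beta>) * mu2 l"
definition mu_t3 :: "('l \<Rightarrow> real) \<Rightarrow> ('l \<Rightarrow> real) \<Rightarrow> real \<Rightarrow> real \<Rightarrow> 'l \<Rightarrow> real" where
  "mu_t3 mu1 mu2 \<alpha> \<beta> l = (\<alpha> + \<beta>) * (mu1 l + mu2 l)"

definition S_Lambda_Gam :: "'l measure \<Rightarrow> ('l \<Rightarrow> real) \<Rightarrow> ('l \<Rightarrow> real) \<Rightarrow> real \<Rightarrow> real \<Rightarrow> real" where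
  "S_Lambda_Gam L mu1 mu2 \<alpha> \<beta> =
     (1/2) * (\<integral>l. max (max (mu_t1 mu1 \<beta> l) (mu_t2 mu2 \<beta> l)) (mu_t3 mu1 mu2 \<alpha> \<beta> l) \<partial>L) - \<beta>"

definition omega_Lambda :: "'l measure \<Rightarrow> ('l \<Rightarrow> real) \<Rightarrow> ('l \<Rightarrow> real) \<Rightarrow> real \<Rightarrow> real \<Rightarrow> real" where
  "omega_Lambda L mu1 mu2 \<alpha> \<beta> =
     (let m1 = mu_t1 mu1 \<beta>; m2 = mu_t2 mu2 \<beta>; m3 = mu_t3 mu1 mu2 \<alpha> \<beta>;
          T1 = (\<integral>l. min (m1 l) (m2 l) \<partial>L);
          T2 = (\<integral>l. min (m1 l) (m3 l) \<partial>L) - (\<alpha> + \<beta>);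
          T3 = (\<integral>l. min (m2 l) (m3 l) \<partial>L) - (\<alpha> + \<beta>);
          T4 = (\<integral>l. min (min (m1 l) (m2 l)) (m3 l) \<partial>L)
      in T1 + T2 + T3 - T4)"

end

theory Submission
  imports Defs
begin

lemma max3_identity:
  fixes a b c :: real
  shows "max (max a b) c = a + b + c - min a b - min a c - min b c + min (min a b) c"
  by (simp add: max_def min_def)

lemma povm_exists: "is_POVM ([mat 1, 0, 0] :: (complex ^ 'n::finite ^ 'n) list)"
proof -
  have "psd (mat 1 :: complex ^ 'n ^ 'n)"
    unfolding psd_def expval_def cinner_vec_def
    by (auto simp: matrix_vector_mul_lid Im_sum Re_sum intro!: sum_nonneg sum.neutral)
  moreover have "psd (0 :: complex ^ 'n ^ 'n)"
    unfolding psd_def expval_def cinner_vec_def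
    by (simp add: matrix_vector_mult_def)
  ultimately show ?thesis unfolding is_POVM_def by auto
qed

lemma mult_bound_integrable:
  fixes mu x :: "'l \<Rightarrow> real"
  assumes "integrable L mu" "mu \<in> borel_measurable L" "x \<in> borel_measurable L"
    and "\<And>l. l \<in> space L \<Longrightarrow> 0 \<le> x l \<and> x l \<le> 1"
  shows "integrable L (\<lambda>l. mu l * x l)"
proof (rule Bochner_Integration.integrable_bound[OF assms(1)])
  show "(\<lambda>l. mu l * x l) \<in> borel_measurable L" using assms(2,3) by measurable
  show "AE l in L. norm (mu l * x l) \<le> norm (mu l)"
  proof (rule AE_I2)
    fix l assume "l \<in> space L"
    then have "0 \<le> x l" "x l \<le> 1" using assms(4) by auto
    then show "norm (mu l * x l) \<le> norm (mu l)"
      by (simp add: abs_mult mult_left_le)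
  qed
qed

lemma alg_aux:
  fixes a b A B C D :: real
  shows "1/2*(1+b+(1+b)+2*(a+b) - A - B - C + D) - b = 1 - (A + (B-(a+b)) + (C-(a+b)) - D)/2"
  by (simp add: field_simps)

theorem theorem1:
  fixes psi1 psi2 :: "complex ^ 'n::finite"
    and L :: "'l measure" and mu1 mu2 :: "'l \<Rightarrow> real"
    and xi :: "(complex ^ 'n ^ 'n) list \<Rightarrow> nat \<Rightarrow> 'l \<Rightarrow> real"
    and \<alpha> \<beta> :: real
  assumes "pure_state psi1" and "pure_state psi2"
    and "0 \<le> \<alpha>" and "\<alpha> \<le> 1" and "0 \<le> \<beta>" and "\<beta> \<le> 1"
    and "ontological_model L mu1 mu2 xi psi1 psi2"
  shows "S_Q_Gam psi1 psi2 \<alpha> \<beta> \<le> S_Lambda_Gam L mu1 mu2 \<alpha> \<beta>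
       \<and> S_Lambda_Gam L mu1 mu2 \<alpha> \<beta> = 1 - omega_Lambda L mu1 mu2 \<alpha> \<beta> / 2"
proof -
  note om = assms(7)[unfolded ontological_model_def]
  have mu1m: "mu1 \<in> borel_measurable L" and mu1p: "\<And>l. l \<in> space L \<Longrightarrow> mu1 l \<ge> 0"
    and mu1i: "integrable L mu1" and mu1I: "integral\<^sup>L L mu1 = 1" using om by auto
  have mu2m: "mu2 \<in> borel_measurable L" and mu2p: "\<And>l. l \<in> space L \<Longrightarrow> mu2 l \<ge> 0"
    and mu2i: "integrable L mu2" and mu2I: "integral\<^sup>L L mu2 = 1" using om by auto
  define m1 where "m1 = mu_t1 mu1 \<beta>"
  define m2 where "m2 = mu_t2 mu2 \<beta>"
  define m3 where "m3 = mu_t3 mu1 mu2 \<alpha> \<beta>"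
  have m1e: "m1 = (\<lambda>l. (1 + \<beta>) * mu1 l)" unfolding m1_def mu_t1_def by auto
  have m2e: "m2 = (\<lambda>l. (1 + \<beta>) * mu2 l)" unfolding m2_def mu_t2_def by auto
  have m3e: "m3 = (\<lambda>l. (\<alpha> + \<beta>) * mu1 l + (\<alpha> + \<beta>) * mu2 l)"
    unfolding m3_def mu_t3_def by (auto simp: algebra_simps)
  have i1: "integrable L m1" unfolding m1e using mu1i by auto
  have i2: "integrable L m2" unfolding m2e using mu2i by auto
  have i3: "integrable L m3" unfolding m3e using mu1i mu2i by auto
  have I1: "integral\<^sup>L L m1 = 1 + \<beta>" unfolding m1e using mu1I by simp
  have I2: "integral\<^sup>L L m2 = 1 + \<beta>" unfolding m2e using mu2I by simp
  have I3: "integral\<^sup>L L m3 = 2 * (\<alpha> + \<beta>)" unfolding m3e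
    using mu1I mu2I mu1i mu2i by (simp add: Bochner_Integration.integral_add)
  have imax: "integrable L (\<lambda>l. max (max (m1 l) (m2 l)) (m3 l))" using i1 i2 i3 by auto
  have i12: "integrable L (\<lambda>l. min (m1 l) (m2 l))" using i1 i2 by auto
  have i13: "integrable L (\<lambda>l. min (m1 l) (m3 l))" using i1 i3 by auto
  have i23: "integrable L (\<lambda>l. min (m2 l) (m3 l))" using i2 i3 by auto
  have i123: "integrable L (\<lambda>l. min (min (m1 l) (m2 l)) (m3 l))" using i12 i3 by auto
  have Imax: "(\<integral>l. max (max (m1 l) (m2 l)) (m3 l) \<partial>L)
      = integral\<^sup>L L m1 + integral\<^sup>L L m2 + integral\<^sup>L L m3
        - (\<integral>l. min (m1 l) (m2 l) \<partial>L) - (\<integral>l. min (m1 l) (m3 l) \<partial>L)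
        - (\<integral>l. min (m2 l) (m3 l) \<partial>L) + (\<integral>l. min (min (m1 l) (m2 l)) (m3 l) \<partial>L)"
    unfolding max3_identity
    using i1 i2 i3 i12 i13 i23 i123
    by (simp add: Bochner_Integration.integral_add Bochner_Integration.integral_diff)
  have SL: "S_Lambda_Gam L mu1 mu2 \<alpha> \<beta> = (1/2) * (\<integral>l. max (max (m1 l) (m2 l)) (m3 l) \<partial>L) - \<beta>"
    unfolding S_Lambda_Gam_def m1_def m2_def m3_def by simp
  have part2: "S_Lambda_Gam L mu1 mu2 \<alpha> \<beta> = 1 - omega_Lambda L mu1 mu2 \<alpha> \<beta> / 2"
    unfolding SL omega_Lambda_def Let_def m1_def[symmetric] m2_def[symmetric] m3_def[symmetric]
      Imax I1 I2 I3 by (simp only: Let_def alg_aux)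
  have bound: "gamble_payoff psi1 psi2 \<alpha> \<beta> Ms \<le> (\<integral>l. max (max (m1 l) (m2 l)) (m3 l) \<partial>L) - 2 * \<beta>"
    if Ms: "is_POVM Ms" "length Ms = 3" for Ms
  proof -
    define x0 where "x0 = xi Ms 0"
    define x1 where "x1 = xi Ms 1"
    define x2 where "x2 = xi Ms 2"
    have H: "(\<forall>k<3. xi Ms k \<in> borel_measurable L \<and> (\<forall>l\<in>space L. xi Ms k l \<ge> 0))
        \<and> (\<forall>l\<in>space L. (\<Sum>k<3. xi Ms k l) = 1)
        \<and> (\<forall>k<3.
             expval psi1 (Ms ! k) = complex_of_real (\<integral>l. mu1 l * xi Ms k l \<partial>L)
           \<and> expval psi2 (Ms ! k) = complex_of_real (\<integral>l. mu2 l * xi Ms k l \<partial>L))"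
      using om[THEN conjunct2, rule_format, OF Ms(1)] unfolding Ms(2) .
    have sum3: "\<And>f :: nat \<Rightarrow> real. (\<Sum>k<3. f k) = f 0 + f 1 + f 2"
      by (simp add: numeral_3_eq_3 numeral_2_eq_2)
    have x0m: "x0 \<in> borel_measurable L" and x1m: "x1 \<in> borel_measurable L"
      and x2m: "x2 \<in> borel_measurable L" using H unfolding x0_def x1_def x2_def by auto
    have xs: "\<And>l. l \<in> space L \<Longrightarrow> 0 \<le> x0 l \<and> 0 \<le> x1 l \<and> 0 \<le> x2 l \<and> x0 l + x1 l + x2 l = 1"
      using H unfolding x0_def x1_def x2_def sum3 by auto
    have b0: "\<And>l. l \<in> space L \<Longrightarrow> 0 \<le> x0 l \<and> x0 l \<le> 1" using xs by force
    have b1: "\<And>l. l \<in> space L \<Longrightarrow> 0 \<le> x1 l \<and> x1 l \<le> 1" using xs by force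
    have b2: "\<And>l. l \<in> space L \<Longrightarrow> 0 \<le> x2 l \<and> x2 l \<le> 1" using xs by force
    have j10: "integrable L (\<lambda>l. mu1 l * x0 l)" by (rule mult_bound_integrable[OF mu1i mu1m x0m b0])
    have j11: "integrable L (\<lambda>l. mu1 l * x1 l)" by (rule mult_bound_integrable[OF mu1i mu1m x1m b1])
    have j12: "integrable L (\<lambda>l. mu1 l * x2 l)" by (rule mult_bound_integrable[OF mu1i mu1m x2m b2])
    have j20: "integrable L (\<lambda>l. mu2 l * x0 l)" by (rule mult_bound_integrable[OF mu2i mu2m x0m b0])
    have j21: "integrable L (\<lambda>l. mu2 l * x1 l)" by (rule mult_bound_integrable[OF mu2i mu2m x1m b1])
    have j22: "integrable L (\<lambda>l. mu2 l * x2 l)" by (rule mult_bound_integrable[OF mu2i mu2m x2m b2])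
    have p10: "prob psi1 Ms 1 = (\<integral>l. mu1 l * x0 l \<partial>L)"
      using H[THEN conjunct2, THEN conjunct2, rule_format, of 0, THEN conjunct1] unfolding prob_def x0_def by simp
    have p11: "prob psi1 Ms 2 = (\<integral>l. mu1 l * x1 l \<partial>L)"
      using H[THEN conjunct2, THEN conjunct2, rule_format, of 1, THEN conjunct1] unfolding prob_def x1_def by simp
    have p12: "prob psi1 Ms 3 = (\<integral>l. mu1 l * x2 l \<partial>L)"
      using H[THEN conjunct2, THEN conjunct2, rule_format, of 2, THEN conjunct1] unfolding prob_def x2_def by simp
    have p20: "prob psi2 Ms 1 = (\<integral>l. mu2 l * x0 l \<partial>L)"
      using H[THEN conjunct2, THEN conjunct2, rule_format, of 0, THEN conjunct2] unfolding prob_def x0_def by simp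
    have p21: "prob psi2 Ms 2 = (\<integral>l. mu2 l * x1 l \<partial>L)"
      using H[THEN conjunct2, THEN conjunct2, rule_format, of 1, THEN conjunct2] unfolding prob_def x1_def by simp
    have p22: "prob psi2 Ms 3 = (\<integral>l. mu2 l * x2 l \<partial>L)"
      using H[THEN conjunct2, THEN conjunct2, rule_format, of 2, THEN conjunct2] unfolding prob_def x2_def by simp
    define g where "g = (\<lambda>l. mu1 l * x0 l - \<beta> * (mu1 l * x1 l) + \<alpha> * (mu1 l * x2 l)
       + mu2 l * x1 l - \<beta> * (mu2 l * x0 l) + \<alpha> * (mu2 l * x2 l))"
    have ig: "integrable L g" unfolding g_def using j10 j11 j12 j20 j21 j22 by auto
    have payg: "gamble_payoff psi1 psi2 \<alpha> \<beta> Ms = integral\<^sup>L L g"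
      unfolding gamble_payoff_def p10 p11 p12 p20 p21 p22 g_def
      using j10 j11 j12 j20 j21 j22
      by (simp add: Bochner_Integration.integral_add Bochner_Integration.integral_diff)
    define h where "h = (\<lambda>l. max (max (m1 l) (m2 l)) (m3 l) - \<beta> * mu1 l - \<beta> * mu2 l)"
    have ih: "integrable L h" unfolding h_def using imax mu1i mu2i by auto
    have Ih: "integral\<^sup>L L h = (\<integral>l. max (max (m1 l) (m2 l)) (m3 l) \<partial>L) - 2 * \<beta>"
      unfolding h_def using imax mu1i mu2i mu1I mu2I
      by (simp add: Bochner_Integration.integral_diff)
    have "integral\<^sup>L L g \<le> integral\<^sup>L L h"
    proof (rule integral_mono[OF ig ih])
      fix l assume l: "l \<in> space L"
      have eq: "g l = x0 l * m1 l + x1 l * m2 l + x2 l * m3 l - \<beta> * mu1 l - \<beta> * mu2 l"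
      proof -
        have k: "g l - (x0 l * m1 l + x1 l * m2 l + x2 l * m3 l - \<beta> * mu1 l - \<beta> * mu2 l)
            = - (\<beta> * mu1 l + \<beta> * mu2 l) * (x0 l + x1 l + x2 l - 1)"
          by (simp add: g_def m1e m2e m3e algebra_simps)
        then show ?thesis using xs[OF l] by simp
      qed
      have "x0 l * m1 l + x1 l * m2 l + x2 l * m3 l
          \<le> x0 l * max (max (m1 l) (m2 l)) (m3 l) + x1 l * max (max (m1 l) (m2 l)) (m3 l)
            + x2 l * max (max (m1 l) (m2 l)) (m3 l)"
        using xs[OF l] by (intro add_mono mult_left_mono) auto
      also have "\<dots> = max (max (m1 l) (m2 l)) (m3 l)"
        using xs[OF l] by (metis distrib_right mult_1)
      finally show "g l \<le> h l" unfolding eq h_def by simp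
    qed
    then show ?thesis using payg Ih by simp
  qed
  have ne: "{gamble_payoff psi1 psi2 \<alpha> \<beta> Ms | Ms. is_POVM Ms \<and> length Ms = 3} \<noteq> {}"
    using povm_exists[where 'n='n] by fastforce
  have "Sup {gamble_payoff psi1 psi2 \<alpha> \<beta> Ms | Ms. is_POVM Ms \<and> length Ms = 3}
      \<le> (\<integral>l. max (max (m1 l) (m2 l)) (m3 l) \<partial>L) - 2 * \<beta>"
    using ne bound by (intro cSup_least) auto
  then have part1: "S_Q_Gam psi1 psi2 \<alpha> \<beta> \<le> S_Lambda_Gam L mu1 mu2 \<alpha> \<beta>"
    unfolding S_Q_Gam_def SL by simp
  show ?thesis using part1 part2 by simp
qed

end
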